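(* Let $n>0$ be an integer of length $l$. Then $$\lim_{k\to\infty}\ \sum_{\substack{m:\ \mathrm{ld}_l(m)=n\\ k(m)=k}}\frac1m=b\log\!\left(1+\frac1n\right),$$ where the sum is over all positive integers $m$ whose base-$b$ representation starts with that of $n$ and contains exactly $k$ occurrences of $d$.
   Context: Fix $b\ge2$ and $d\in\{0,\dots,b-1\}$. For an integer $n\ge0$, its length $l(n)$ is the smallest $l\ge0$ with $n<b^l$, and $k(n)$ is the number of occurrences of $d$ in its base-$b$ representation without leading zeros. For $m>0$ of length $q\ge l$, $\mathrm{ld}_l(m)=\lfloor m/b^{q-l}\rfloor$ (only $m$ of length $\ge l$ are considered). *)

theory Defs
  imports "HOL-Analysis.Analysis"
begin

definition blen :: "nat \<Rightarrow> nat \<Rightarrow> nat" where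
  "blen b n = (LEAST l. n < b ^ l)"

text \<open>Number of occurrences of digit d in the base-b representation of n
  (without leading zeros; n = 0 has the empty representation).\<close>
fun digcount :: "nat \<Rightarrow> nat \<Rightarrow> nat \<Rightarrow> nat" where
  "digcount b d n =
     (if n = 0 \<or> b < 2 then 0
      else (if n mod b = d then 1 else 0) + digcount b d (n div b))"

text \<open>Leading l digits of m (meaningful for m of length at least l).\<close>
definition ld :: "nat \<Rightarrow> nat \<Rightarrow> nat \<Rightarrow> nat" where
  "ld b l m = m div b ^ (blen b m - l)"

end

theory Submission
  imports Defs
begin

declare digcount.simps[simp del]

fun cnt :: "nat \<Rightarrow> nat \<Rightarrow> nat \<Rightarrow> nat \<Rightarrow> nat" where
  "cnt b d 0 u = 0"
| "cnt b d (Suc J) u = (if u mod b = d then 1 else 0) + cnt b d J (u div b)"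

lemma cnt_le: "cnt b d J u \<le> J"
  by (induction J arbitrary: u) (auto simp: le_SucI)

lemma cnt_split: "cnt b d (J + t) u = cnt b d J (u mod b ^ J) + cnt b d t (u div b ^ J)"
proof (induction J arbitrary: u)
  case 0 then show ?case by simp
next
  case (Suc J)
  have e1: "(u mod b ^ Suc J) mod b = u mod b"
    by (simp add: mod_mod_cancel)
  have e2: "(u mod b ^ Suc J) div b = (u div b) mod b ^ J"
  proof (cases "b = 0")
    case True then show ?thesis by simp
  next
    case False
    have "u mod (b * b ^ J) = b * (u div b mod b ^ J) + u mod b" by (rule mod_mult2_eq)
    then show ?thesis using False by simp
  qed
  have e3: "(u div b) div b ^ J = u div b ^ Suc J"
    by (simp add: div_mult2_eq)
  have "cnt b d (Suc J + t) u = (if u mod b = d then 1 else 0) + cnt b d (J + t) (u div b)" by simp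
  also have "\<dots> = (if u mod b = d then 1 else 0) + cnt b d J ((u div b) mod b^J) + cnt b d t (u div b ^ Suc J)"
    by (simp only: Suc.IH e3 add.assoc)
  also have "\<dots> = cnt b d (Suc J) (u mod b ^ Suc J) + cnt b d t (u div b ^ Suc J)"
    by (simp only: cnt.simps e1 e2)
  finally show ?case .
qed

lemma blen_props:
  assumes "2 \<le> (b::nat)"
  shows "m < b ^ blen b m" "l < blen b m \<Longrightarrow> b ^ l \<le> m"
proof -
  have "m < 2 ^ m" by (rule less_exp)
  also have "(2::nat) ^ m \<le> b ^ m" using assms by (intro power_mono) auto
  finally have ex: "m < b ^ m" .
  show "m < b ^ blen b m" unfolding blen_def by (rule LeastI[of _ m]) (fact ex)
  show "l < blen b m \<Longrightarrow> b ^ l \<le> m" unfolding blen_def using not_less_Least by (metis not_le)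
qed

lemma blen_eqI:
  assumes "2 \<le> (b::nat)" "m < b ^ l" "\<And>l'. l' < l \<Longrightarrow> b ^ l' \<le> m"
  shows "blen b m = l"
  unfolding blen_def
  by (rule Least_equality) (use assms in \<open>auto simp: not_less[symmetric]\<close>)

lemma blen_shift:
  assumes b: "2 \<le> (b::nat)" and q: "q > 0" and u: "u < b ^ J"
  shows "blen b (q * b ^ J + u) = blen b q + J"
proof -
  let ?l = "blen b q"
  have q1: "q < b ^ ?l" using blen_props(1)[OF b] .
  have l1: "?l \<ge> 1"
  proof (rule ccontr)
    assume "\<not> ?l \<ge> 1" then have "?l = 0" by simp
    with q1 q show False by simp
  qed
  have q2: "b ^ (?l - 1) \<le> q" using blen_props(2)[OF b, of "?l - 1" q] l1 by simp
  show ?thesis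
  proof (rule blen_eqI[OF b])
    have "q * b ^ J + u < q * b ^ J + b ^ J" using u by simp
    also have "\<dots> = (q + 1) * b ^ J" by simp
    also have "\<dots> \<le> b ^ ?l * b ^ J" using q1 by (intro mult_right_mono) auto
    finally show "q * b ^ J + u < b ^ (?l + J)" by (simp add: power_add)
  next
    fix l' assume "l' < ?l + J"
    then have "b ^ l' \<le> b ^ (?l - 1 + J)" using b by (intro power_increasing) auto
    also have "\<dots> = b ^ (?l - 1) * b ^ J" by (simp add: power_add)
    also have "\<dots> \<le> q * b ^ J" using q2 by simp
    finally show "b ^ l' \<le> q * b ^ J + u" by simp
  qed
qed

lemma digcount_step:
  assumes "2 \<le> b" "n > 0"
  shows "digcount b d n = (if n mod b = d then 1 else 0) + digcount b d (n div b)"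
  using digcount.simps[of b d n] assms by simp

lemma digcount_shift:
  assumes b: "2 \<le> (b::nat)" and q: "q > 0"
  shows "u < b ^ J \<Longrightarrow> digcount b d (q * b ^ J + u) = digcount b d q + cnt b d J u"
proof (induction J arbitrary: u)
  case 0 then show ?case by simp
next
  case (Suc J)
  let ?m = "q * b ^ Suc J + u"
  have pos: "?m > 0" using q b by simp
  have m1: "?m mod b = u mod b"
    by (simp add: mod_add_left_eq[symmetric])
  have m2: "?m div b = q * b ^ J + u div b"
    using b by (simp add: div_add1_eq mult.assoc)
  have u2: "u div b < b ^ J" using Suc.prems b
    by (simp add: div_less_iff_less_mult mult.commute)
  have "digcount b d ?m = (if ?m mod b = d then 1 else 0) + digcount b d (?m div b)"
    by (rule digcount_step[OF b pos])
  then have "digcount b d ?m = (if u mod b = d then 1 else 0) + (digcount b d q + cnt b d J (u div b))"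
    unfolding m1 m2 Suc.IH[OF u2] .
  then show ?case by simp
qed

definition W :: "nat \<Rightarrow> nat \<Rightarrow> nat \<Rightarrow> nat \<Rightarrow> real" where
  "W b d J K = (\<Sum>u<b^J. if cnt b d J u = K then 1 else 0)"

lemma sum_split_mult:
  fixes f :: "nat \<Rightarrow> real"
  shows "(\<Sum>u<m * b. f u) = (\<Sum>v<m. \<Sum>a<b. f (v * b + a))"
proof (induction m)
  case 0 then show ?case by simp
next
  case (Suc m)
  have "(\<Sum>u<Suc m * b. f u) = (\<Sum>u\<in>{0..<m * b}. f u) + (\<Sum>u\<in>{m * b..<b+m * b}. f u)"
    by (simp add: lessThan_atLeast0 sum.atLeastLessThan_concat add.commute)
  also have "(\<Sum>u\<in>{m * b..<b+m * b}. f u) = (\<Sum>a\<in>{0..<b}. f (m * b+a))"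
    using sum.shift_bounds_nat_ivl[of f 0 "m * b" b] by (simp add: add.commute)
  finally show ?case using Suc by (simp add: lessThan_atLeast0)
qed

lemma inner_sum:
  assumes "d < b"
  shows "(\<Sum>a<b. if (if a = d then 1 else 0) + c = (K::nat) then 1 else 0 :: real)
       = real (b - 1) * (if c = K then 1 else 0) + (if c + 1 = K then 1 else 0)"
proof -
  have "(\<Sum>a<b. if (if a = d then 1 else 0) + c = (K::nat) then 1 else 0 :: real)
     = (if 1 + c = K then 1 else 0) + (\<Sum>a\<in>{..<b}-{d}. if (if a = d then 1 else 0) + c = (K::nat) then 1 else 0 :: real)"
    using assms by (subst sum.remove[of _ d]) auto
  also have "(\<Sum>a\<in>{..<b}-{d}. if (if a = d then 1 else 0) + c = (K::nat) then 1 else 0 :: real)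
       = (\<Sum>a\<in>{..<b}-{d}. if c = K then 1 else 0)"
    by (intro sum.cong) auto
  also have "\<dots> = real (b - 1) * (if c = K then 1 else 0)"
    using assms by simp
  finally show ?thesis by simp
qed

lemma W_0: "W b d 0 K = (if K = 0 then 1 else 0)"
  by (simp add: W_def)

lemma W_Suc:
  assumes "2 \<le> b" "d < b"
  shows "W b d (Suc J) K = real (b - 1) * W b d J K + (if K > 0 then W b d J (K - 1) else 0)"
proof -
  have "W b d (Suc J) K = (\<Sum>u<b^J * b. if cnt b d (Suc J) u = K then 1 else 0)"
    unfolding W_def power_Suc2 by (rule refl)
  also have "\<dots> = (\<Sum>v<b^J. \<Sum>a<b. if cnt b d (Suc J) (v * b + a) = K then 1 else 0)"
    by (rule sum_split_mult)
  also have "\<dots> = (\<Sum>v<b^J. \<Sum>a<b. if (if a = d then 1 else 0) + cnt b d J v = K then 1 else 0)"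
    using assms by (intro sum.cong refl) auto
  also have "\<dots> = (\<Sum>v<b^J. real (b - 1) * (if cnt b d J v = K then 1 else 0)
                     + (if cnt b d J v + 1 = K then 1 else 0))"
    using assms by (simp add: inner_sum)
  also have "\<dots> = real (b - 1) * W b d J K + (\<Sum>v<b^J. if cnt b d J v + 1 = K then 1 else 0)"
    unfolding W_def by (simp add: sum.distrib sum_distrib_left)
  also have "(\<Sum>v<b^J. if cnt b d J v + 1 = K then 1 else 0 :: real) = (if K > 0 then W b d J (K - 1) else 0)"
    unfolding W_def by (cases K) simp_all
  finally show ?thesis .
qed

lemma W_nonneg: "W b d J K \<ge> 0"
  unfolding W_def by (intro sum_nonneg) auto

definition Q :: "nat \<Rightarrow> nat \<Rightarrow> nat \<Rightarrow> nat \<Rightarrow> real" where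
  "Q b d K M = (\<Sum>J<M. W b d J K / real b ^ J)"

lemma Q_Suc:
  assumes "2 \<le> b" "d < b"
  shows "Q b d K (Suc M) = (if K = 0 then 1 else 0) + (real b - 1) / real b * Q b d K M
          + (if K > 0 then Q b d (K - 1) M / real b else 0)"
proof -
  have "Q b d K (Suc M) = W b d 0 K + (\<Sum>J<M. W b d (Suc J) K / real b ^ Suc J)"
    unfolding Q_def by (subst sum.lessThan_Suc_shift) simp
  also have "(\<Sum>J<M. W b d (Suc J) K / real b ^ Suc J)
     = (\<Sum>J<M. (real b - 1) / real b * (W b d J K / real b ^ J)
          + (if K > 0 then (W b d J (K - 1) / real b ^ J) / real b else 0))"
    using assms by (intro sum.cong refl) (auto simp: W_Suc of_nat_diff field_simps)
  also have "\<dots> = (real b - 1) / real b * Q b d K M + (if K > 0 then Q b d (K - 1) M / real b else 0)"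
    unfolding Q_def by (simp add: sum.distrib sum_distrib_left sum_divide_distrib)
  finally show ?thesis by (simp add: W_0)
qed

lemma Q_nonneg: "Q b d K M \<ge> 0"
  unfolding Q_def using W_nonneg by (intro sum_nonneg divide_nonneg_nonneg) auto

lemma Q_le:
  assumes "2 \<le> b" "d < b"
  shows "Q b d K M \<le> real b"
proof (induction K arbitrary: M)
  case 0
  show ?case
  proof (induction M)
    case 0 then show ?case by (simp add: Q_def)
  next
    case (Suc M)
    have "(real b - 1) / real b * Q b d 0 M \<le> (real b - 1) / real b * real b"
      using Suc assms by (intro mult_left_mono) auto
    then show ?case using assms by (simp add: Q_Suc)
  qed
next
  case (Suc K)
  note IHK = Suc.IH
  show ?case
  proof (induction M)
    case 0 then show ?case by (simp add: Q_def)
  next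
    case (Suc M)
    have "(real b - 1) / real b * Q b d (Suc K) M \<le> (real b - 1) / real b * real b"
      using Suc assms by (intro mult_left_mono) auto
    moreover have "Q b d K M / real b \<le> 1" using IHK[of M] assms by simp
    moreover have "(real b - 1)/real b * real b = real b - 1" using assms by simp
    moreover have "Q b d (Suc K) (Suc M) = (real b - 1) / real b * Q b d (Suc K) M + Q b d K M / real b"
      using Q_Suc[OF assms] by simp
    ultimately show ?case by linarith
  qed
qed

lemma Q_mono: "incseq (Q b d K)"
  unfolding Q_def by (intro incseq_SucI) (simp add: W_nonneg)

lemma Q_lim:
  assumes "2 \<le> b" "d < b"
  shows "Q b d K \<longlonglongrightarrow> real b"
proof -
  have bpos: "real b > 0" using assms by simp
  show ?thesis
proof (induction K)
  case 0
  have "\<forall>i. Q b d 0 i \<le> real b" using Q_le[OF assms] by blast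
  then obtain G where G: "Q b d 0 \<longlonglongrightarrow> G" "\<forall>i. Q b d 0 i \<le> G"
    by (rule incseq_convergent[OF Q_mono])
  have "(\<lambda>M. Q b d 0 (Suc M)) \<longlonglongrightarrow> G" using G(1) by (rule LIMSEQ_Suc)
  moreover have "(\<lambda>M. Q b d 0 (Suc M)) \<longlonglongrightarrow> 1 + (real b - 1) / real b * G"
    using assms by (simp add: Q_Suc) (intro tendsto_intros G(1), use bpos in auto)
  ultimately have "G = 1 + (real b - 1) / real b * G" by (rule LIMSEQ_unique)
  then have "G = real b" using bpos by (simp add: field_simps; argo)
  then show ?case using G(1) by simp
next
  case (Suc K)
  have "\<forall>i. Q b d (Suc K) i \<le> real b" using Q_le[OF assms] by blast
  then obtain G where G: "Q b d (Suc K) \<longlonglongrightarrow> G" "\<forall>i. Q b d (Suc K) i \<le> G"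
    by (rule incseq_convergent[OF Q_mono])
  have lim1: "(\<lambda>M. Q b d (Suc K) (Suc M)) \<longlonglongrightarrow> G" using G(1) by (rule LIMSEQ_Suc) have "(\<lambda>M. (real b - 1) / real b * Q b d (Suc K) M + Q b d K M / real b)
      \<longlonglongrightarrow> (real b - 1) / real b * G + real b / real b"
    by (intro tendsto_intros G(1) Suc.IH) (use bpos in auto)
  moreover have "(\<lambda>M. Q b d (Suc K) (Suc M)) = (\<lambda>M. (real b - 1) / real b * Q b d (Suc K) M + Q b d K M / real b)"
    using Q_Suc[OF assms] by simp
  ultimately have "(\<lambda>M. Q b d (Suc K) (Suc M)) \<longlonglongrightarrow> (real b - 1) / real b * G + real b / real b"
    by simp
  with lim1 have "G = (real b - 1) / real b * G + real b / real b" by (rule LIMSEQ_unique)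
  then have "G = real b" using bpos by (simp add: field_simps; argo)
  then show ?case using G(1) by simp
qed
qed

definition E :: "nat \<Rightarrow> nat \<Rightarrow> nat \<Rightarrow> nat \<Rightarrow> nat set" where
  "E b d p K = {m. \<exists>J u. u < b ^ J \<and> cnt b d J u = K \<and> m = p * b ^ J + u}"

lemma block_upper:
  assumes "2 \<le> b" "p > 0"
  shows "(\<Sum>u\<in>{u. u < b ^ J \<and> cnt b d J u = K}. 1 / real (p * b ^ J + u))
         \<le> W b d J K / (real p * real b ^ J)"
proof -
  have "(\<Sum>u\<in>{u. u < b ^ J \<and> cnt b d J u = K}. 1 / real (p * b ^ J + u))
      = (\<Sum>u<b ^ J. if cnt b d J u = K then 1 / real (p * b ^ J + u) else 0)"
    by (subst sum.inter_filter[symmetric]) (auto intro!: sum.cong)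
  also have "\<dots> \<le> (\<Sum>u<b ^ J. (if cnt b d J u = K then 1 else 0) / (real p * real b ^ J))"
    using assms by (intro sum_mono) (auto intro!: frac_le)
  also have "\<dots> = W b d J K / (real p * real b ^ J)"
    unfolding W_def by (simp add: sum_divide_distrib)
  finally show ?thesis .
qed

lemma block_lower:
  assumes "2 \<le> b" "p > 0"
  shows "W b d J K / ((real p + 1) * real b ^ J) \<le>
         (\<Sum>u\<in>{u. u < b ^ J \<and> cnt b d J u = K}. 1 / real (p * b ^ J + u))"
proof -
  have "W b d J K / ((real p + 1) * real b ^ J) =
        (\<Sum>u<b ^ J. (if cnt b d J u = K then 1 else 0) / ((real p + 1) * real b ^ J))"
    unfolding W_def by (simp add: sum_divide_distrib)
  also have "\<dots> \<le> (\<Sum>u<b ^ J. if cnt b d J u = K then 1 / real (p * b ^ J + u) else 0)"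
  proof (intro sum_mono)
    fix u assume u: "u \<in> {..<b ^ J}"
    have "real (p * b ^ J + u) \<le> (real p + 1) * real b ^ J"
    proof -
      have "p * b ^ J + u \<le> (p + 1) * b ^ J" using u by simp
      then have "real (p * b ^ J + u) \<le> real ((p + 1) * b ^ J)" by (simp only: of_nat_le_iff)
      moreover have "real ((p + 1) * b ^ J) = (real p + 1) * real b ^ J" by (simp add: algebra_simps)
      ultimately show ?thesis by linarith
    qed
    moreover have "p * b ^ J + u > 0" using assms by simp
    then have "real (p * b ^ J + u) > 0" by (simp only: of_nat_0_less_iff)
    ultimately show "(if cnt b d J u = K then 1 else 0) / ((real p + 1) * real b ^ J)
        \<le> (if cnt b d J u = K then 1 / real (p * b ^ J + u) else 0)"
      by (auto intro!: frac_le)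
  qed
  also have "\<dots> = (\<Sum>u\<in>{u. u < b ^ J \<and> cnt b d J u = K}. 1 / real (p * b ^ J + u))"
    by (subst sum.inter_filter[symmetric]) (auto intro!: sum.cong)
  finally show ?thesis .
qed

lemma E_bounds:
  assumes b: "2 \<le> b" and d: "d < b" and p: "p > 0"
  shows "(\<lambda>m. 1 / real m) summable_on E b d p K"
    and "real b / (real p + 1) \<le> (\<Sum>\<^sub>\<infinity>m\<in>E b d p K. 1 / real m)"
    and "(\<Sum>\<^sub>\<infinity>m\<in>E b d p K. 1 / real m) \<le> real b / real p"
proof -
  define U where "U J = {u. u < b ^ J \<and> cnt b d J u = K}" for J
  define Sig where "Sig = Sigma UNIV U"
  define h where "h = (\<lambda>(J, u). p * b ^ J + u)"
  define gg where "gg J u = 1 / real (p * b ^ J + u)" for J u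
  have finU: "finite (U J)" for J unfolding U_def by simp
  have Eeq: "E b d p K = h ` Sig"
    unfolding E_def Sig_def U_def h_def by auto
  have inj: "inj_on h Sig"
  proof (rule inj_onI)
    fix x y assume x: "x \<in> Sig" and y: "y \<in> Sig" and hxy: "h x = h y"
    obtain J u where xe: "x = (J, u)" and u: "u < b ^ J" using x unfolding Sig_def U_def by auto
    obtain J' u' where ye: "y = (J', u')" and u': "u' < b ^ J'" using y unfolding Sig_def U_def by auto
    have "blen b (p * b ^ J + u) = blen b (p * b ^ J' + u')" using hxy xe ye h_def by simp
    then have "J = J'" using blen_shift[OF b p u] blen_shift[OF b p u'] by simp
    then show "x = y" using hxy xe ye h_def by simp
  qed
  have comp: "(\<lambda>m. 1 / real m) \<circ> h = case_prod gg"
    unfolding h_def gg_def by auto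
  have finsum: "sum (case_prod gg) (Sigma {..<M} U) = (\<Sum>J<M. \<Sum>u\<in>U J. gg J u)" for M
    by (subst sum.Sigma) (auto simp: finU)
  have QM: "(\<Sum>J<M. \<Sum>u\<in>U J. gg J u) \<le> Q b d K M / real p" for M
  proof -
    have "(\<Sum>J<M. \<Sum>u\<in>U J. gg J u) \<le> (\<Sum>J<M. W b d J K / (real p * real b ^ J))"
      unfolding U_def gg_def by (intro sum_mono block_upper[OF b p])
    also have "\<dots> = Q b d K M / real p"
      unfolding Q_def by (simp add: sum_divide_distrib ac_simps)
    finally show ?thesis .
  qed
  have QM2: "Q b d K M / (real p + 1) \<le> (\<Sum>J<M. \<Sum>u\<in>U J. gg J u)" for M
  proof -
    have "Q b d K M / (real p + 1) = (\<Sum>J<M. W b d J K / ((real p + 1) * real b ^ J))"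
      unfolding Q_def by (simp add: sum_divide_distrib ac_simps)
    also have "\<dots> \<le> (\<Sum>J<M. \<Sum>u\<in>U J. gg J u)"
      unfolding U_def gg_def by (intro sum_mono block_lower[OF b p])
    finally show ?thesis .
  qed
  have gnn: "case_prod gg x \<ge> 0" for x unfolding gg_def by (cases x) auto
  have fin_bound: "sum (case_prod gg) F \<le> real b / real p" if F: "finite F" "F \<subseteq> Sig" for F
  proof -
    obtain M where M: "\<forall>j\<in>fst ` F. j < M"
      using finite_nat_set_iff_bounded[of "fst ` F"] F(1) by auto
    have sub: "F \<subseteq> Sigma {..<M} U" using F(2) M unfolding Sig_def by force
    have "sum (case_prod gg) F \<le> sum (case_prod gg) (Sigma {..<M} U)"
      using sub gnn by (intro sum_mono2) (auto simp: finU)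
    also have "\<dots> \<le> Q b d K M / real p" using finsum QM by simp
    also have "\<dots> \<le> real b / real p" using Q_le[OF b d] p by (intro divide_right_mono) auto
    finally show ?thesis .
  qed
  have summ: "case_prod gg summable_on Sig"
    using gnn fin_bound by (intro nonneg_bdd_above_summable_on) (auto intro!: bdd_aboveI)
  show "(\<lambda>m. 1 / real m) summable_on E b d p K"
    unfolding Eeq using summable_on_reindex[OF inj, of "\<lambda>m. 1 / real m"] summ comp by simp
  have inf_eq: "(\<Sum>\<^sub>\<infinity>m\<in>E b d p K. 1 / real m) = infsum (case_prod gg) Sig"
    unfolding Eeq using infsum_reindex[OF inj, of "\<lambda>m. 1 / real m"] comp by simp
  show "(\<Sum>\<^sub>\<infinity>m\<in>E b d p K. 1 / real m) \<le> real b / real p"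
    unfolding inf_eq by (rule infsum_le_finite_sums[OF summ fin_bound])
  have lowM: "Q b d K M / (real p + 1) \<le> infsum (case_prod gg) Sig" for M
  proof -
    have "Q b d K M / (real p + 1) \<le> sum (case_prod gg) (Sigma {..<M} U)"
      using finsum QM2 by simp
    also have "\<dots> \<le> infsum (case_prod gg) Sig"
      using gnn by (intro finite_sum_le_infsum[OF summ]) (auto simp: finU Sig_def)
    finally show ?thesis .
  qed
  have lim: "(\<lambda>M. Q b d K M / (real p + 1)) \<longlonglongrightarrow> real b / (real p + 1)"
    by (intro tendsto_intros Q_lim[OF b d]) auto
  show "real b / (real p + 1) \<le> (\<Sum>\<^sub>\<infinity>m\<in>E b d p K. 1 / real m)"
    unfolding inf_eq using lim lowM by (intro LIMSEQ_le_const2) auto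
qed

lemma div_shift:
  fixes b J u p :: nat
  assumes "u < b ^ J"
  shows "(p * b ^ J + u) div b ^ J = p"
proof -
  have "b ^ J > 0" using assms by linarith
  then have "(u + p * b ^ J) div b ^ J = u div b ^ J + p" by simp
  then show ?thesis using assms by (simp add: add.commute)
qed

lemma E_split:
  assumes b: "2 \<le> b" and p: "p > 0" and t: "t \<le> K"
  shows "E b d p K = (\<Union>s\<in>{..<b^t}. E b d (p * b ^ t + s) (K - cnt b d t s))"
proof (intro equalityI subsetI)
  fix m assume "m \<in> E b d p K"
  then obtain J u where u: "u < b ^ J" and c: "cnt b d J u = K" and m: "m = p * b ^ J + u"
    unfolding E_def by auto
  have "t \<le> J"
  proof (rule ccontr)
    assume "\<not> t \<le> J"
    then have "cnt b d J u < K" using cnt_le[of b d J u] t by linarith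
    with c show False by simp
  qed
  define J' where "J' = J - t"
  have JJ: "J = J' + t" using \<open>t \<le> J\<close> unfolding J'_def by simp
  define s where "s = u div b ^ J'"
  define u' where "u' = u mod b ^ J'"
  have bJ: "b ^ J' > 0" using b by simp
  have s: "s < b ^ t" unfolding s_def using u JJ
    by (simp add: div_less_iff_less_mult[OF bJ] power_add mult.commute)
  have u': "u' < b ^ J'" unfolding u'_def using bJ by simp
  have cs: "cnt b d J u = cnt b d J' u' + cnt b d t s"
    unfolding JJ u'_def s_def by (rule cnt_split)
  have ue: "u = s * b ^ J' + u'" unfolding s_def u'_def by (rule div_mult_mod_eq[symmetric])
  have me: "m = (p * b ^ t + s) * b ^ J' + u'"
    unfolding m ue JJ by (simp add: power_add algebra_simps)
  have "m \<in> E b d (p * b ^ t + s) (K - cnt b d t s)"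
    unfolding E_def using u' me cs c by auto
  then show "m \<in> (\<Union>s\<in>{..<b^t}. E b d (p * b ^ t + s) (K - cnt b d t s))"
    using s by auto
next
  fix m assume "m \<in> (\<Union>s\<in>{..<b^t}. E b d (p * b ^ t + s) (K - cnt b d t s))"
  then obtain s J' u' where s: "s < b ^ t" and u': "u' < b ^ J'"
    and c: "cnt b d J' u' = K - cnt b d t s" and m: "m = (p * b ^ t + s) * b ^ J' + u'"
    unfolding E_def by auto
  define u where "u = s * b ^ J' + u'"
  have "u < s * b ^ J' + b ^ J'" unfolding u_def using u' by simp
  also have "\<dots> = (s + 1) * b ^ J'" by simp
  also have "\<dots> \<le> b ^ t * b ^ J'" using s by (intro mult_right_mono) auto
  finally have u: "u < b ^ (J' + t)" by (simp add: power_add mult.commute)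
  have um: "u mod b ^ J' = u'" unfolding u_def using u' by simp
  have ud: "u div b ^ J' = s" unfolding u_def using div_shift[OF u', of s] by simp
  have "cnt b d (J' + t) u = cnt b d J' u' + cnt b d t s"
    using cnt_split[of b d J' t u] um ud by simp
  also have "\<dots> = K" using c cnt_le[of b d t s] t by simp
  finally have cK: "cnt b d (J' + t) u = K" .
  have me: "m = p * b ^ (J' + t) + u"
    unfolding m u_def by (simp add: power_add algebra_simps)
  show "m \<in> E b d p K" unfolding E_def using u cK me by blast
qed

lemma E_disj:
  assumes b: "2 \<le> b" and p1: "p1 > 0" and p2: "p2 > 0"
    and bl: "blen b p1 = blen b p2" and ne: "p1 \<noteq> p2"
  shows "E b d p1 K1 \<inter> E b d p2 K2 = {}"
proof (rule ccontr)
  assume "E b d p1 K1 \<inter> E b d p2 K2 \<noteq> {}"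
  then obtain m where "m \<in> E b d p1 K1" "m \<in> E b d p2 K2" by blast
  then obtain J1 u1 J2 u2 where u1: "u1 < b ^ J1" and m1: "m = p1 * b ^ J1 + u1"
    and u2: "u2 < b ^ J2" and m2: "m = p2 * b ^ J2 + u2"
    unfolding E_def by auto
  have "blen b p1 + J1 = blen b p2 + J2"
    using blen_shift[OF b p1 u1] blen_shift[OF b p2 u2] m1 m2 by simp
  then have J: "J1 = J2" using bl by simp
  have "m div b ^ J1 = p1" using div_shift[OF u1] m1 by simp
  moreover have "m div b ^ J1 = p2" using div_shift[OF u2] m2 J by simp
  ultimately show False using ne by simp
qed

lemma ln_step:
  fixes x :: real
  assumes "x \<ge> 1"
  shows "1 / (x + 1) \<le> ln (x + 1) - ln x" "ln (x + 1) - ln x \<le> 1 / x"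
proof -
  have e: "1 + 1 / x = (x + 1) / x" using assms by (simp add: field_simps)
  have "ln ((x + 1) / x) = ln (x + 1) - ln x" using assms by (simp add: ln_div)
  then have "ln (x + 1) - ln x = ln (1 + 1 / x)" using e by simp
  also have "\<dots> \<le> 1 / x" using assms by (intro ln_add_one_self_le_self) auto
  finally show "ln (x + 1) - ln x \<le> 1 / x" .
  have "ln x - ln (x + 1) = ln (x / (x + 1))"
    using assms by (simp add: ln_div)
  also have "\<dots> \<le> x / (x + 1) - 1" using assms by (intro ln_le_minus_one) auto
  also have "\<dots> = - (1 / (x + 1))" using assms by (simp add: field_simps)
  finally show "1 / (x + 1) \<le> ln (x + 1) - ln x" by linarith
qed

lemma ln_sums:
  assumes "N > (0::nat)"
  shows "(\<Sum>s<N'. 1 / (real (N + s) + 1)) \<le> ln (real (N + N')) - ln (real N)"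
    and "ln (real (N + N')) - ln (real N) \<le> (\<Sum>s<N'. 1 / real (N + s))"
proof -
  have tel0: "(\<Sum>s<N'. ln (real (N + Suc s)) - ln (real (N + s))) = ln (real (N + N')) - ln (real (N + 0))"
    by (rule sum_lessThan_telescope)
  have x: "real (N + Suc s) = real (N + s) + 1" for s by simp
  have tel: "ln (real (N + N')) - ln (real N) = (\<Sum>s<N'. ln (real (N + s) + 1) - ln (real (N + s)))"
    using tel0 unfolding x by simp
  show "(\<Sum>s<N'. 1 / (real (N + s) + 1)) \<le> ln (real (N + N')) - ln (real N)"
    unfolding tel using assms by (intro sum_mono ln_step(1)) auto
  show "ln (real (N + N')) - ln (real N) \<le> (\<Sum>s<N'. 1 / real (N + s))"
    unfolding tel using assms by (intro sum_mono ln_step(2)) auto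
qed

lemma sums_diff:
  assumes "N > (0::nat)"
  shows "(\<Sum>s<N'. 1 / real (N + s)) - (\<Sum>s<N'. 1 / (real (N + s) + 1)) \<le> 1 / real N"
proof -
  have "(\<Sum>s<N'. 1 / real (N + s)) - (\<Sum>s<N'. 1 / (real (N + s) + 1))
      = (\<Sum>s<N'. (- 1 / real (N + Suc s)) - (- 1 / real (N + s)))"
    by (simp add: sum_subtractf[symmetric] algebra_simps)
  also have "\<dots> = 1 / real N - 1 / real (N + N')"
    by (subst sum_lessThan_telescope) simp
  also have "\<dots> \<le> 1 / real N" by simp
  finally show ?thesis .
qed

lemma S_char:
  assumes b: "2 \<le> b" and n: "n > 0"
  shows "{m::nat. m > 0 \<and> blen b m \<ge> blen b n \<and> ld b (blen b n) m = n \<and> digcount b d m = k}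
       = {m. \<exists>J u. u < b ^ J \<and> digcount b d n + cnt b d J u = k \<and> m = n * b ^ J + u}"
proof (intro equalityI subsetI)
  fix m assume "m \<in> {m::nat. m > 0 \<and> blen b m \<ge> blen b n \<and> ld b (blen b n) m = n \<and> digcount b d m = k}"
  then have m0: "m > 0" and ml: "blen b m \<ge> blen b n" and ld: "m div b ^ (blen b m - blen b n) = n"
    and dc: "digcount b d m = k" unfolding ld_def by auto
  define J where "J = blen b m - blen b n"
  define u where "u = m mod b ^ J"
  have u: "u < b ^ J" unfolding u_def using b by simp
  have me: "m = n * b ^ J + u" unfolding u_def using ld J_def by (metis div_mult_mod_eq)
  have "digcount b d m = digcount b d n + cnt b d J u"
    unfolding me by (rule digcount_shift[OF b n u])
  then show "m \<in> {m. \<exists>J u. u < b ^ J \<and> digcount b d n + cnt b d J u = k \<and> m = n * b ^ J + u}"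
    using u me dc by auto
next
  fix m assume "m \<in> {m. \<exists>J u. u < b ^ J \<and> digcount b d n + cnt b d J u = k \<and> m = n * b ^ J + u}"
  then obtain J u where u: "u < b ^ J" and c: "digcount b d n + cnt b d J u = k"
    and me: "m = n * b ^ J + u" by auto
  have m0: "m > 0" using me n b by simp
  have bl: "blen b m = blen b n + J" unfolding me by (rule blen_shift[OF b n u])
  have "ld b (blen b n) m = n" unfolding ld_def bl using div_shift[OF u] me by simp
  moreover have "digcount b d m = k" unfolding me digcount_shift[OF b n u] using c .
  ultimately show "m \<in> {m::nat. m > 0 \<and> blen b m \<ge> blen b n \<and> ld b (blen b n) m = n \<and> digcount b d m = k}"
    using m0 bl by simp
qed

lemma S_E:
  assumes b: "2 \<le> b" and n: "n > 0"
  shows "k \<ge> digcount b d n \<Longrightarrow>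
    {m::nat. m > 0 \<and> blen b m \<ge> blen b n \<and> ld b (blen b n) m = n \<and> digcount b d m = k}
      = E b d n (k - digcount b d n)"
  unfolding S_char[OF b n] E_def by force

lemma S_E2:
  assumes b: "2 \<le> b" and n: "n > 0"
  shows "k < digcount b d n \<Longrightarrow>
    {m::nat. m > 0 \<and> blen b m \<ge> blen b n \<and> ld b (blen b n) m = n \<and> digcount b d m = k} = {}"
  unfolding S_char[OF b n] by auto

lemma T_bound:
  assumes b: "2 \<le> b" and d: "d < b" and n: "n > 0"
  shows "\<bar>(\<Sum>\<^sub>\<infinity>m\<in>E b d n K. 1 / real m) - real b * ln (1 + 1 / real n)\<bar> \<le> real b / real b ^ K"
proof -
  define N where "N = n * b ^ K"
  define P where "P s = n * b ^ K + s" for s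
  have N0: "N > 0" using n b unfolding N_def by simp
  have P0: "P s > 0" for s using n b unfolding P_def by simp
  have Ps: "E b d n K = (\<Union>s\<in>{..<b^K}. E b d (P s) (K - cnt b d K s))"
    unfolding P_def by (rule E_split[OF b n order.refl])
  have blP: "blen b (P s) = blen b n + K" if "s < b ^ K" for s
    unfolding P_def by (rule blen_shift[OF b n that])
  have T_eq: "(\<Sum>\<^sub>\<infinity>m\<in>E b d n K. 1 / real m) = (\<Sum>s<b^K. \<Sum>\<^sub>\<infinity>m\<in>E b d (P s) (K - cnt b d K s). 1 / real m)"
    unfolding Ps
  proof (rule sum_infsum[symmetric])
    show "finite {..<b^K}" by simp
    show "(\<lambda>m. 1 / real m) summable_on E b d (P s) (K - cnt b d K s)" for s
      by (rule E_bounds(1)[OF b d P0])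
    show "E b d (P s) (K - cnt b d K s) \<inter> E b d (P s') (K - cnt b d K s') = {}"
      if "s \<in> {..<b^K}" "s' \<in> {..<b^K}" "s \<noteq> s'" for s s'
    proof -
      have "blen b (P s) = blen b (P s')" using blP that by simp
      moreover have "P s \<noteq> P s'" using that unfolding P_def by simp
      ultimately show ?thesis by (rule E_disj[OF b P0 P0])
    qed
  qed
  define Up where "Up = (\<Sum>s<b^K. 1 / real (N + s))"
  define Lo where "Lo = (\<Sum>s<b^K. 1 / (real (N + s) + 1))"
  have T_le: "(\<Sum>\<^sub>\<infinity>m\<in>E b d n K. 1 / real m) \<le> real b * Up"
    unfolding T_eq Up_def sum_distrib_left
    by (intro sum_mono) (use E_bounds(3)[OF b d P0] in \<open>simp add: P_def N_def\<close>)
  have T_ge: "real b * Lo \<le> (\<Sum>\<^sub>\<infinity>m\<in>E b d n K. 1 / real m)"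
    unfolding T_eq Lo_def sum_distrib_left
    by (intro sum_mono) (use E_bounds(2)[OF b d P0] in \<open>simp add: P_def N_def\<close>)
  have lnN: "ln (real (N + b ^ K)) - ln (real N) = ln (1 + 1 / real n)"
  proof -
    have bK: "real b ^ K > 0" using b by simp
    have "real (N + b ^ K) = (real n + 1) * real b ^ K" unfolding N_def by (simp add: algebra_simps)
    moreover have "real N = real n * real b ^ K" unfolding N_def by simp
    ultimately have "ln (real (N + b ^ K)) - ln (real N) = ln (real n + 1) - ln (real n)"
      using bK n by (simp add: ln_mult)
    also have "\<dots> = ln ((real n + 1) / real n)" using n by (simp add: ln_div)
    also have "(real n + 1) / real n = 1 + 1 / real n" using n by (simp add: field_simps)
    finally show ?thesis .
  qed
  have L1: "Lo \<le> ln (1 + 1 / real n)" using ln_sums(1)[OF N0, of "b ^ K"] lnN unfolding Lo_def by simp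
  have L2: "ln (1 + 1 / real n) \<le> Up" using ln_sums(2)[OF N0, of "b ^ K"] lnN unfolding Up_def by simp
  have L3: "Up - Lo \<le> 1 / real N" using sums_diff[OF N0, of "b ^ K"] unfolding Up_def Lo_def .
  have "1 / real N \<le> 1 / real b ^ K"
  proof -
    have "real b ^ K \<le> real N" unfolding N_def using mult_right_mono[of 1 "real n" "real b ^ K"] n by simp
    then show ?thesis using b N0 by (intro divide_left_mono) auto
  qed
  with L3 have L4: "real b * (Up - Lo) \<le> real b * (1 / real b ^ K)"
    by (intro mult_left_mono) auto
  have "real b * Up - real b * ln (1 + 1 / real n) \<le> real b * (Up - Lo)"
    using L1 b by (simp add: algebra_simps)
  moreover have "real b * ln (1 + 1 / real n) - real b * Lo \<le> real b * (Up - Lo)"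
    using L2 b by (simp add: algebra_simps)
  ultimately show ?thesis using T_le T_ge L4 by (simp add: abs_le_iff)
qed

theorem mainTheorem16:
  fixes b d n :: nat
  assumes "b \<ge> 2" and "d < b" and "n > 0"
  defines "S k \<equiv> {m::nat. m > 0 \<and> blen b m \<ge> blen b n \<and>
                         ld b (blen b n) m = n \<and> digcount b d m = k}"
  shows "(\<forall>k. (\<lambda>m. 1 / real m) summable_on S k) \<and>
         ((\<lambda>k. \<Sum>\<^sub>\<infinity>m\<in>S k. 1 / real m) \<longlonglongrightarrow> real b * ln (1 + 1 / real n))"
proof -
  have b: "2 \<le> b" and d: "d < b" and n: "n > 0" using assms by auto
  define k0 where "k0 = digcount b d n"
  have SE: "S k = E b d n (k - k0)" if "k0 \<le> k" for k
    unfolding S_def k0_def using S_E[OF b n] that k0_def by simp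
  have S0: "S k = {}" if "k < k0" for k
    unfolding S_def k0_def using S_E2[OF b n] that k0_def by simp
  have summ: "(\<lambda>m. 1 / real m) summable_on S k" for k
  proof (cases "k0 \<le> k")
    case True then show ?thesis using SE E_bounds(1)[OF b d n] by simp
  next
    case False then show ?thesis using S0 by simp
  qed
  define c where "c = real b * ln (1 + 1 / real n)"
  define C where "C = real b * real b ^ k0"
  have bnd: "norm ((\<Sum>\<^sub>\<infinity>m\<in>S k. 1 / real m) - c) \<le> C * (1 / real b) ^ k" if "k0 \<le> k" for k
  proof -
    have bpos: "real b > 0" using b by simp
    have "real b ^ k = real b ^ (k - k0) * real b ^ k0"
      using that by (simp add: power_add[symmetric])
    then have eq: "real b / real b ^ (k - k0) = C * (1 / real b) ^ k"
      unfolding C_def using bpos by (simp add: power_one_over field_simps)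
    show ?thesis using T_bound[OF b d n, of "k - k0"] SE[OF that] eq unfolding c_def by simp
  qed
  have g0: "(\<lambda>k. C * (1 / real b) ^ k) \<longlonglongrightarrow> C * 0"
    by (intro tendsto_intros LIMSEQ_power_zero) (use b in simp)
  have "(\<lambda>k. (\<Sum>\<^sub>\<infinity>m\<in>S k. 1 / real m) - c) \<longlonglongrightarrow> 0"
  proof (rule Lim_null_comparison)
    show "\<forall>\<^sub>F k in sequentially. norm ((\<Sum>\<^sub>\<infinity>m\<in>S k. 1 / real m) - c) \<le> C * (1 / real b) ^ k"
      using bnd by (auto simp: eventually_sequentially)
    show "(\<lambda>k. C * (1 / real b) ^ k) \<longlonglongrightarrow> 0" using g0 by simp
  qed
  then have "(\<lambda>k. \<Sum>\<^sub>\<infinity>m\<in>S k. 1 / real m) \<longlonglongrightarrow> c" by (rule LIM_zero_cancel)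
  then show ?thesis using summ unfolding c_def by simp
qed

end
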